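(* Let $X$ be a metric space, let $A\subseteq X$ be nonempty and let $Y$ be a hyperconvex metric space. Then for every $f\in\mathcal{N}(A,Y)$, the set $\Phi(f)$ of all $f'\in\mathcal{N}(X,Y)$ with $f'|_A=f$ is externally hyperconvex in $(\mathcal{N}(X,Y),d_\infty)$.
   Context: A metric space $Y$ is hyperconvex if $\bigcap_\alpha B(x_\alpha,r_\alpha)\ne\emptyset$ for every family of points $x_\alpha\in Y$ and $r_\alpha>0$ with $d(x_\alpha,x_\beta)\le r_\alpha+r_\beta$ ($B$ = closed ball). A subset $E$ of a metric space $Z$ is externally hyperconvex (with respect to $Z$) if for any family $\{x_\alpha\}\subseteq Z$ and reals $\{r_\alpha\}$ with $d(x_\alpha,x_\beta)\le r_\alpha+r_\beta$ and $\mathrm{dist}(x_\alpha,E)\le r_\alpha$ for all $\alpha,\beta$, one has $\bigcap_\alpha B(x_\alpha,r_\alpha)\cap E\ne\emptyset$. $\mathcal{N}(X,Y)$ is the set of bounded nonexpansive maps $X\to Y$ with the supremum metric $d_\infty$. *)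

theory Defs
  imports "HOL-Analysis.Analysis"
begin

definition nonexp_on :: "'a::metric_space set \<Rightarrow> ('a \<Rightarrow> 'b::metric_space) \<Rightarrow> bool" where
  "nonexp_on A f \<longleftrightarrow> (\<forall>x\<in>A. \<forall>y\<in>A. dist (f x) (f y) \<le> dist x y)"

text \<open>N(A,Y): bounded nonexpansive maps A -> Y (only values on A matter).\<close>
definition bnd_nonexp :: "'a::metric_space set \<Rightarrow> ('a \<Rightarrow> 'b::metric_space) set" where
  "bnd_nonexp A = {f. nonexp_on A f \<and> bounded (f ` A)}"

definition dinf :: "('a \<Rightarrow> 'b::metric_space) \<Rightarrow> ('a \<Rightarrow> 'b) \<Rightarrow> real" where
  "dinf f g = (SUP x. dist (f x) (g x))"

text \<open>Hyperconvexity; a family of (centre, radius) pairs is represented as a set of pairs.\<close>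
definition hyperconvex :: "'b::metric_space set \<Rightarrow> bool" where
  "hyperconvex Y \<longleftrightarrow>
     (\<forall>F. F \<subseteq> Y \<times> {r. r > 0} \<longrightarrow>
        (\<forall>(x,r)\<in>F. \<forall>(y,s)\<in>F. dist x y \<le> r + s) \<longrightarrow>
        (\<exists>z\<in>Y. \<forall>(x,r)\<in>F. dist x z \<le> r))"

text \<open>External hyperconvexity of E in the metric space (Z,d); dist(x,E) is the
  infimum in the extended reals (= infinity for empty E).\<close>
definition ext_hyperconvex :: "'c set \<Rightarrow> ('c \<Rightarrow> 'c \<Rightarrow> real) \<Rightarrow> 'c set \<Rightarrow> bool" where
  "ext_hyperconvex Z d E \<longleftrightarrow>
     (\<forall>F. F \<subseteq> Z \<times> (UNIV::real set) \<longrightarrow>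
        (\<forall>(x,r)\<in>F. \<forall>(y,s)\<in>F. d x y \<le> r + s) \<longrightarrow>
        (\<forall>(x,r)\<in>F. (INF e\<in>E. ereal (d x e)) \<le> ereal r) \<longrightarrow>
        (\<exists>e\<in>E. \<forall>(x,r)\<in>F. d x e \<le> r))"

end

theory Submission
  imports Defs
begin

lemma hc0:
  assumes hc: "hyperconvex (UNIV :: 'b::metric_space set)"
    and F0: "\<forall>(x,r)\<in>F. r \<ge> (0::real)"
    and Fp: "\<forall>(x,r)\<in>F. \<forall>(y,s)\<in>F. dist x y \<le> r + s"
  shows "\<exists>z::'b. \<forall>(x,r)\<in>F. dist x z \<le> r"
proof (cases "\<exists>x0. (x0, 0) \<in> F")
  case True
  then obtain x0 where x0: "(x0,0) \<in> F" by blast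
  show ?thesis
  proof (intro exI ballI, clarify)
    fix x r assume "(x,r) \<in> F"
    with Fp x0 show "dist x x0 \<le> r" by fastforce
  qed
next
  case False
  then have "F \<subseteq> UNIV \<times> {r. r > 0}" using F0
    by (auto simp: less_le)
  with hc Fp show ?thesis unfolding hyperconvex_def by blast
qed

lemma core:
  fixes A :: "'a::metric_space set" and f :: "'a \<Rightarrow> 'b::metric_space"
    and F :: "(('a \<Rightarrow> 'b) \<times> real) set"
  assumes hc: "hyperconvex (UNIV::'b set)"
    and fA: "nonexp_on A f"
    and Fg: "\<forall>(g,r)\<in>F. nonexp_on UNIV g"
    and Fr: "\<forall>(g,r)\<in>F. r \<ge> 0"
    and Fp: "\<forall>(g,r)\<in>F. \<forall>(g',r')\<in>F. \<forall>x. dist (g x) (g' x) \<le> r + r'"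
    and FA: "\<forall>(g,r)\<in>F. \<forall>a\<in>A. dist (f a) (g a) \<le> r"
  shows "\<exists>e. nonexp_on UNIV e \<and> (\<forall>a\<in>A. e a = f a) \<and> (\<forall>(g,r)\<in>F. \<forall>x. dist (e x) (g x) \<le> r)"
proof -
  define S where "S = {G. (\<forall>(x,y)\<in>G. \<forall>(x',y')\<in>G. dist y y' \<le> dist x x') \<and>
     (\<forall>a\<in>A. (a, f a) \<in> G) \<and> (\<forall>(x,y)\<in>G. \<forall>(g,r)\<in>F. dist y (g x) \<le> r)}"
  define G0 where "G0 = (\<lambda>a. (a, f a)) ` A"
  have G0S: "G0 \<in> S"
    using fA FA unfolding S_def G0_def nonexp_on_def
    by (auto simp: dist_commute)
  have "\<forall>C\<in>chains S. \<exists>U\<in>S. \<forall>X\<in>C. X \<subseteq> U"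
  proof
    fix C assume C: "C \<in> chains S"
    show "\<exists>U\<in>S. \<forall>X\<in>C. X \<subseteq> U"
    proof (cases "C = {}")
      case True then show ?thesis using G0S by blast
    next
      case False
      have CS: "C \<subseteq> S" and ch: "\<forall>X\<in>C. \<forall>Y\<in>C. X \<subseteq> Y \<or> Y \<subseteq> X"
        using C unfolding chains_def chain_subset_def by auto
      have "\<Union>C \<in> S"
        unfolding S_def
      proof (intro CollectI conjI)
        show "\<forall>(x,y)\<in>\<Union>C. \<forall>(x',y')\<in>\<Union>C. dist y y' \<le> dist x x'"
        proof (clarify)
          fix x y x' y' X Y assume a: "(x,y) \<in> X" "X \<in> C" "(x',y') \<in> Y" "Y \<in> C"
          from ch a obtain Z where "Z \<in> C" "(x,y) \<in> Z" "(x',y') \<in> Z" by blast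
          with CS show "dist y y' \<le> dist x x'" unfolding S_def by blast
        qed
        show "\<forall>a\<in>A. (a, f a) \<in> \<Union>C" using False CS unfolding S_def by blast
        show "\<forall>(x,y)\<in>\<Union>C. \<forall>(g,r)\<in>F. dist y (g x) \<le> r"
          using CS unfolding S_def by blast
      qed
      then show ?thesis by blast
    qed
  qed
  from Zorn_Lemma2[OF this] obtain M where MS: "M \<in> S" and Mmax: "\<forall>X\<in>S. M \<subseteq> X \<longrightarrow> X = M"
    by blast
  have M1: "\<forall>(x,y)\<in>M. \<forall>(x',y')\<in>M. dist y y' \<le> dist x x'"
    and M2: "\<forall>a\<in>A. (a, f a) \<in> M"
    and M3: "\<forall>(x,y)\<in>M. \<forall>(g,r)\<in>F. dist y (g x) \<le> r"
    using MS unfolding S_def by auto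
  have dom: "\<exists>y. (x,y) \<in> M" for x
  proof (rule ccontr)
    assume nx: "\<nexists>y. (x,y) \<in> M"
    define H where "H = (\<lambda>(x',y). (y, dist x x')) ` M \<union> (\<lambda>(g,r). (g x, r)) ` F"
    have H0: "\<forall>(c,r)\<in>H. r \<ge> 0" using Fr unfolding H_def by auto
    have Hp: "\<forall>(c,r)\<in>H. \<forall>(d,s)\<in>H. dist c d \<le> r + s"
    proof (clarify)
      fix c r d s assume cr: "(c,r) \<in> H" and ds: "(d,s) \<in> H"
      show "dist c d \<le> r + s"
      proof (cases "(c,r) \<in> (\<lambda>(x',y). (y, dist x x')) ` M")
        case True
        then obtain x1 where 1: "(x1,c) \<in> M" "r = dist x x1" by auto
        show ?thesis
        proof (cases "(d,s) \<in> (\<lambda>(x',y). (y, dist x x')) ` M")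
          case True
          then obtain x2 where 2: "(x2,d) \<in> M" "s = dist x x2" by auto
          have "dist c d \<le> dist x1 x2" using M1 1 2 by blast
          also have "\<dots> \<le> r + s" using 1 2 dist_triangle2[of x1 x2 x] by (simp add: dist_commute)
          finally show ?thesis .
        next
          case False
          then obtain g where g: "(g,s) \<in> F" "d = g x" using ds unfolding H_def by auto
          have "dist c (g x1) \<le> s" using M3 1 g by blast
          moreover have "dist (g x1) (g x) \<le> dist x1 x" using Fg g unfolding nonexp_on_def by blast
          ultimately show ?thesis using 1 g dist_triangle[of c "g x" "g x1"]
            by (simp add: dist_commute)
        qed
      next
        case False
        then obtain g where g: "(g,r) \<in> F" "c = g x" using cr unfolding H_def by auto
        show ?thesis
        proof (cases "(d,s) \<in> (\<lambda>(x',y). (y, dist x x')) ` M")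
          case True
          then obtain x2 where 2: "(x2,d) \<in> M" "s = dist x x2" by auto
          have "dist d (g x2) \<le> r" using M3 2 g by blast
          moreover have "dist (g x2) (g x) \<le> dist x2 x" using Fg g unfolding nonexp_on_def by blast
          ultimately show ?thesis using 2 g dist_triangle[of "g x" d "g x2"]
            by (simp add: dist_commute)
        next
          case False
          then obtain g' where g': "(g',s) \<in> F" "d = g' x" using ds unfolding H_def by auto
          show ?thesis using Fp g g' by fastforce
        qed
      qed
    qed
    from hc0[OF hc H0 Hp] obtain z where z: "\<forall>(c,r)\<in>H. dist c z \<le> r" by blast
    have zM: "dist y z \<le> dist x x'" if "(x',y) \<in> M" for x' y
      using z that unfolding H_def by fastforce
    have zF: "dist (g x) z \<le> r" if "(g,r) \<in> F" for g r
      using z that unfolding H_def by fastforce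
    have "insert (x,z) M \<in> S"
      unfolding S_def
    proof (intro CollectI conjI)
      show "\<forall>(x1,y)\<in>insert (x,z) M. \<forall>(x',y')\<in>insert (x,z) M. dist y y' \<le> dist x1 x'"
        using M1 zM by (fastforce simp: dist_commute)
      show "\<forall>a\<in>A. (a, f a) \<in> insert (x,z) M" using M2 by blast
      show "\<forall>(x1,y)\<in>insert (x,z) M. \<forall>(g,r)\<in>F. dist y (g x1) \<le> r"
        using M3 zF by (fastforce simp: dist_commute)
    qed
    with Mmax have "insert (x,z) M = M" by blast
    with nx show False by blast
  qed
  define e where "e = (\<lambda>x. SOME y. (x,y) \<in> M)"
  have eM: "(x, e x) \<in> M" for x unfolding e_def using dom[of x] by (rule someI_ex)
  show ?thesis
  proof (intro exI conjI)
    show "nonexp_on UNIV e" unfolding nonexp_on_def using M1 eM by fast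
    show "\<forall>a\<in>A. e a = f a"
    proof
      fix a assume "a \<in> A"
      then have "dist (e a) (f a) \<le> dist a a" using M1 M2 eM by blast
      then show "e a = f a" by simp
    qed
    show "\<forall>(g,r)\<in>F. \<forall>x. dist (e x) (g x) \<le> r" using M3 eM by fast
  qed
qed

lemma dist_le_dinf:
  assumes "g \<in> bnd_nonexp UNIV" "h \<in> bnd_nonexp UNIV"
  shows "dist (g x) (h x) \<le> dinf g h"
proof -
  from assms obtain c R where c: "\<forall>y. dist c (g y) \<le> R"
    unfolding bnd_nonexp_def bounded_def by blast
  from assms obtain c' R' where c': "\<forall>y. dist c' (h y) \<le> R'"
    unfolding bnd_nonexp_def bounded_def by blast
  have "dist (g y) (h y) \<le> R + dist c c' + R'" for y
  proof -
    have "dist (g y) (h y) \<le> dist (g y) c + dist c (h y)" by (rule dist_triangle)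
    moreover have "dist c (h y) \<le> dist c c' + dist c' (h y)" by (rule dist_triangle)
    moreover have "dist (g y) c = dist c (g y)" by (rule dist_commute)
    moreover have "dist c (g y) \<le> R" "dist c' (h y) \<le> R'" using c c' by auto
    ultimately show ?thesis by linarith
  qed
  then have "bdd_above (range (\<lambda>y. dist (g y) (h y)))" by (intro bdd_aboveI[where M="R + dist c c' + R'"]) auto
  then show ?thesis unfolding dinf_def by (intro cSUP_upper) auto
qed

theorem lemma5p4:
  fixes A :: "'a::metric_space set" and f :: "'a \<Rightarrow> 'b::metric_space"
  assumes "A \<noteq> {}"
    and "hyperconvex (UNIV :: 'b set)"
    and "f \<in> bnd_nonexp A"
  shows "ext_hyperconvex (bnd_nonexp (UNIV :: 'a set)) dinf
           {f' \<in> bnd_nonexp (UNIV :: 'a set). \<forall>a\<in>A. f' a = f a}"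
proof -
  let ?Z = "bnd_nonexp (UNIV :: 'a set)"
  let ?E = "{f' \<in> bnd_nonexp (UNIV :: 'a set). \<forall>a\<in>A. f' a = f a}"
  have fA: "nonexp_on A f" and fb: "bounded (f ` A)" using assms(3) unfolding bnd_nonexp_def by auto
  show ?thesis unfolding ext_hyperconvex_def
  proof (intro allI impI)
    fix F :: "(('a \<Rightarrow> 'b) \<times> real) set"
    assume FZ: "F \<subseteq> ?Z \<times> UNIV"
      and Fp: "\<forall>(x,r)\<in>F. \<forall>(y,s)\<in>F. dinf x y \<le> r + s"
      and FI: "\<forall>(x,r)\<in>F. (INF e\<in>?E. ereal (dinf x e)) \<le> ereal r"
    show "\<exists>e\<in>?E. \<forall>(x,r)\<in>F. dinf x e \<le> r"
    proof (cases "F = {}")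
      case True
      from fb obtain c R where cR: "\<forall>y\<in>f`A. dist c y \<le> R" unfolding bounded_def by blast
      from assms(1) obtain a0 where "a0 \<in> A" by blast
      then have "dist c (f a0) \<le> R" using cR by blast
      then have R0: "R \<ge> 0" using zero_le_dist[of c "f a0"] by linarith
      have "\<exists>e. nonexp_on UNIV e \<and> (\<forall>a\<in>A. e a = f a) \<and>
           (\<forall>(g,r)\<in>{((\<lambda>_. c), R)}. \<forall>x. dist (e x) (g x) \<le> r)"
        by (rule core[OF assms(2) fA]) (use R0 cR in \<open>auto simp: nonexp_on_def dist_commute\<close>)
      then obtain e where e: "nonexp_on UNIV e" "\<forall>a\<in>A. e a = f a" "\<forall>x. dist (e x) c \<le> R" by auto
      have "bounded (range e)" unfolding bounded_def using e(3) by (auto simp: dist_commute)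
      then have "e \<in> ?E" using e unfolding bnd_nonexp_def by auto
      then show ?thesis using True by blast
    next
      case False
      then obtain g0 r0 where g0: "(g0,r0) \<in> F" by auto
      have Ene: "?E \<noteq> {}"
      proof
        assume E0: "?E = {}"
        have "(INF e\<in>?E. ereal (dinf g0 e)) \<le> ereal r0" using FI g0 by fastforce
        then show False unfolding E0 by (simp add: top_ereal_def)
      qed
      have FA: "\<forall>(g,r)\<in>F. \<forall>a\<in>A. dist (f a) (g a) \<le> r"
      proof (clarify)
        fix g r a assume gr: "(g,r) \<in> F" and a: "a \<in> A"
        have gZ: "g \<in> ?Z" using FZ gr by auto
        show "dist (f a) (g a) \<le> r"
        proof (rule field_le_epsilon)
          fix \<epsilon> :: real assume "0 < \<epsilon>"
          have "(INF e\<in>?E. ereal (dinf g e)) \<le> ereal r" using FI gr by fastforce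
          also have "ereal r < ereal (r + \<epsilon>)" using \<open>0 < \<epsilon>\<close> by simp
          finally have "(INF e\<in>?E. ereal (dinf g e)) < ereal (r + \<epsilon>)" .
          then obtain e where eE: "e \<in> ?E" and "ereal (dinf g e) < ereal (r + \<epsilon>)"
            unfolding INF_less_iff by blast
          then have "dinf g e < r + \<epsilon>" by simp
          moreover have "dist (g a) (e a) \<le> dinf g e"
            using dist_le_dinf[OF gZ] eE by auto
          ultimately show "dist (f a) (g a) \<le> r + \<epsilon>" using eE a by (simp add: dist_commute)
        qed
      qed
      have Fg: "\<forall>(g,r)\<in>F. nonexp_on UNIV g" using FZ unfolding bnd_nonexp_def by auto
      have Fr: "\<forall>(g,r)\<in>F. r \<ge> 0"
      proof (clarify)
        fix g r assume "(g,r) \<in> F"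
        moreover from assms(1) obtain a0 where "a0 \<in> A" by blast
        ultimately have "dist (f a0) (g a0) \<le> r" using FA by blast
        then show "r \<ge> 0" using zero_le_dist[of "f a0" "g a0"] by linarith
      qed
      have Fpp: "\<forall>(g,r)\<in>F. \<forall>(g',r')\<in>F. \<forall>x. dist (g x) (g' x) \<le> r + r'"
      proof (clarify)
        fix g r g' r' x assume 1: "(g,r) \<in> F" and 2: "(g',r') \<in> F"
        then have "g \<in> ?Z" "g' \<in> ?Z" using FZ by auto
        then have "dist (g x) (g' x) \<le> dinf g g'" by (rule dist_le_dinf)
        also have "\<dots> \<le> r + r'" using Fp 1 2 by fastforce
        finally show "dist (g x) (g' x) \<le> r + r'" .
      qed
      obtain e where e: "nonexp_on UNIV e" "\<forall>a\<in>A. e a = f a"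
          "\<forall>(g,r)\<in>F. \<forall>x. dist (e x) (g x) \<le> r"
        using core[OF assms(2) fA Fg Fr Fpp FA] by blast
      have g0Z: "g0 \<in> ?Z" using FZ g0 by auto
      then obtain c R where cR: "\<forall>y. dist c (g0 y) \<le> R" unfolding bnd_nonexp_def bounded_def by blast
      have "dist c (e y) \<le> R + r0" for y
      proof -
        have "dist c (e y) \<le> dist c (g0 y) + dist (g0 y) (e y)" by (rule dist_triangle)
        moreover have "dist (e y) (g0 y) \<le> r0" using e(3) g0 by blast
        moreover have "dist c (g0 y) \<le> R" using cR by blast
        ultimately show ?thesis by (simp add: dist_commute)
      qed
      then have "bounded (range e)" unfolding bounded_def by blast
      then have eE: "e \<in> ?E" using e unfolding bnd_nonexp_def by auto
      have "\<forall>(g,r)\<in>F. dinf g e \<le> r"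
      proof (clarify)
        fix g r assume "(g,r) \<in> F"
        then have "\<forall>x. dist (g x) (e x) \<le> r" using e(3) by (fastforce simp: dist_commute)
        then show "dinf g e \<le> r" unfolding dinf_def by (intro cSUP_least) auto
      qed
      with eE show ?thesis by blast
    qed
  qed
qed

end
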